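(* Let $J\subseteq S$. The fibers of $\Pi_\downarrow^J$ are order-convex: if $u,x,v\in\mathfrak{S}_n^J$ satisfy $u\le_S x\le_S v$ and $\Pi_\downarrow^J(u)=\Pi_\downarrow^J(v)$, then $\Pi_\downarrow^J(u)=\Pi_\downarrow^J(x)$.
   Context: $\mathfrak{S}_n$ is the symmetric group on $[n]$, $s_i=(i,i+1)$, $S=\{s_1,\dots,s_{n-1}\}$, one-line notation $w=w_1\cdots w_n$, $\mathrm{inv}(w)=\{(i,j):i<j,\ w_i>w_j\}$, and the weak order $u\le_S v\iff\mathrm{inv}(u)\subseteq\mathrm{inv}(v)$. For $J\subseteq S$, $\mathfrak{S}_n^J$ is the set of $w$ with $w_i<w_{i+1}$ whenever $s_i\in J$. Writing $J=S\setminus\{s_{j_1},\dots,s_{j_r}\}$ with $j_1<\dots<j_r$, the $J$-regions are $\{1,\dots,j_1\},\{j_1+1,\dots,j_2\},\dots,\{j_r+1,\dots,n\}$. $\mathfrak{S}_n^J(231)$ is the set of $w\in\mathfrak{S}_n^J$ admitting no indices $i<j<k$ in pairwise different $J$-regions with $w_k<w_i<w_j$ and $w_i=w_k+1$. For each $w\in\mathfrak{S}_n^J$ there is a unique greatest element (in $\le_S$) of $\mathfrak{S}_n^J(231)$ lying below $w$; the map $\Pi_\downarrow^J:\mathfrak{S}_n^J\to\mathfrak{S}_n^J(231)$ sends $w$ to this element. *)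

theory Defs
  imports "HOL-Combinatorics.Permutations"
begin

text \<open>The simple transposition s_i is identified with its index i in {1..n-1};
  a subset J of S is a set of such indices.\<close>

definition perms :: "nat \<Rightarrow> (nat \<Rightarrow> nat) set" where
  "perms n = {w. w permutes {1..n}}"

definition inversions :: "nat \<Rightarrow> (nat \<Rightarrow> nat) \<Rightarrow> (nat \<times> nat) set" where
  "inversions n w = {(i, j). 1 \<le> i \<and> i < j \<and> j \<le> n \<and> w i > w j}"

definition weak_le :: "nat \<Rightarrow> (nat \<Rightarrow> nat) \<Rightarrow> (nat \<Rightarrow> nat) \<Rightarrow> bool" where
  "weak_le n u v \<longleftrightarrow> inversions n u \<subseteq> inversions n v"

definition parabolic :: "nat \<Rightarrow> nat set \<Rightarrow> (nat \<Rightarrow> nat) set" where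
  "parabolic n J = {w \<in> perms n. \<forall>i\<in>J. w i < w (Suc i)}"

text \<open>Index (0-based) of the J-region containing position i: the number of
  descents-allowed positions j (s_j not in J) with j < i.\<close>
definition region :: "nat \<Rightarrow> nat set \<Rightarrow> nat \<Rightarrow> nat" where
  "region n J i = card {j \<in> {1..<n} - J. j < i}"

definition avoids231 :: "nat \<Rightarrow> nat set \<Rightarrow> (nat \<Rightarrow> nat) \<Rightarrow> bool" where
  "avoids231 n J w \<longleftrightarrow> \<not> (\<exists>i j k. 1 \<le> i \<and> i < j \<and> j < k \<and> k \<le> n \<and>
      region n J i \<noteq> region n J j \<and> region n J j \<noteq> region n J k \<and> region n J i \<noteq> region n J k \<and>
      w k < w i \<and> w i < w j \<and> w i = w k + 1)"

definition parabolic231 :: "nat \<Rightarrow> nat set \<Rightarrow> (nat \<Rightarrow> nat) set" where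
  "parabolic231 n J = {w \<in> parabolic n J. avoids231 n J w}"

definition pi_down :: "nat \<Rightarrow> nat set \<Rightarrow> (nat \<Rightarrow> nat) \<Rightarrow> (nat \<Rightarrow> nat)" where
  "pi_down n J w = (THE y. y \<in> parabolic231 n J \<and> weak_le n y w \<and>
      (\<forall>z \<in> parabolic231 n J. weak_le n z w \<longrightarrow> weak_le n z y))"

end

theory Submission
  imports Defs
begin

definition greatest :: "nat \<Rightarrow> nat set \<Rightarrow> (nat \<Rightarrow> nat) \<Rightarrow> (nat \<Rightarrow> nat) \<Rightarrow> bool" where
  "greatest n J w y \<longleftrightarrow> y \<in> parabolic231 n J \<and> weak_le n y w \<and>
      (\<forall>z \<in> parabolic231 n J. weak_le n z w \<longrightarrow> weak_le n z y)"

lemma rank_eq: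
  assumes y: "y permutes {1..n}" and i: "i \<in> {1..n}"
  shows "y i = card {j \<in> {1..n}. j = i \<or> (j < i \<and> (j, i) \<notin> inversions n y) \<or> (i < j \<and> (i, j) \<in> inversions n y)}"
proof -
  have inj: "inj y" using permutes_inj[OF y] .
  have yi: "y i \<in> {1..n}" using permutes_in_image[OF y] i by simp
  have eq: "{j \<in> {1..n}. j = i \<or> (j < i \<and> (j, i) \<notin> inversions n y) \<or> (i < j \<and> (i, j) \<in> inversions n y)}
      = {j \<in> {1..n}. y j \<le> y i}"
  proof (rule Collect_cong)
    fix j
    show "(j \<in> {1..n} \<and> (j = i \<or> (j < i \<and> (j, i) \<notin> inversions n y) \<or> (i < j \<and> (i, j) \<in> inversions n y)))
       = (j \<in> {1..n} \<and> y j \<le> y i)"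
    proof (cases "j = i")
      case False
      then have "y j \<noteq> y i" using inj by (metis injD)
      then show ?thesis using False i unfolding inversions_def by auto
    qed simp
  qed
  have img: "y ` {j \<in> {1..n}. y j \<le> y i} = {1..y i}"
  proof
    show "y ` {j \<in> {1..n}. y j \<le> y i} \<subseteq> {1..y i}"
    proof
      fix v assume "v \<in> y ` {j \<in> {1..n}. y j \<le> y i}"
      then obtain j where j: "j \<in> {1..n}" "y j \<le> y i" "v = y j" by blast
      have "y j \<in> {1..n}" using permutes_in_image[OF y] j(1) by simp
      then show "v \<in> {1..y i}" using j by simp
    qed
    show "{1..y i} \<subseteq> y ` {j \<in> {1..n}. y j \<le> y i}"
    proof
      fix v assume v: "v \<in> {1..y i}"
      then have "v \<in> {1..n}" using yi by auto
      then have "v \<in> y ` {1..n}" using permutes_image[OF y] by simp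
      then obtain j where j: "j \<in> {1..n}" "v = y j" by auto
      then have "j \<in> {j \<in> {1..n}. y j \<le> y i}" using v by simp
      then show "v \<in> y ` {j \<in> {1..n}. y j \<le> y i}" using j(2) by (rule rev_image_eqI)
    qed
  qed
  have cd: "card {j \<in> {1..n}. y j \<le> y i} = y i"
    using img
    using card_image[of y "{j \<in> {1..n}. y j \<le> y i}"] inj_on_subset[OF inj, of "{j \<in> {1..n}. y j \<le> y i}"] by simp
  show ?thesis unfolding eq cd ..
qed

lemma inv_determines:
  assumes "y1 permutes {1..n}" "y2 permutes {1..n}" "inversions n y1 = inversions n y2"
  shows "y1 = y2"
proof (rule ext)
  fix i
  show "y1 i = y2 i"
  proof (cases "i \<in> {1..n}")
    case True
    note r1 = rank_eq[OF assms(1) True] and r2 = rank_eq[OF assms(2) True]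
    show ?thesis unfolding r1 r2 assms(3) by (rule refl)
  next
    case False
    then show ?thesis using permutes_not_in[OF assms(1) False] permutes_not_in[OF assms(2) False] by simp
  qed
qed

lemma swap_inv:
  assumes w: "w permutes {1..n}" and ik: "1 \<le> i" "i < k" "k \<le> n" and adj: "w i = w k + 1"
  shows "inversions n (w \<circ> transpose i k) = inversions n w - {(i,k)}"
proof -
  have inj: "inj w" using permutes_inj[OF w] .
  have key: "(w p < w k \<longleftrightarrow> w p < w i) \<and> (w k < w p \<longleftrightarrow> w i < w p)" if "p \<noteq> i" "p \<noteq> k" for p
  proof -
    have "w p \<noteq> w i" "w p \<noteq> w k" using that inj by (auto dest: injD)
    then show ?thesis using adj by auto
  qed
  show ?thesis
  proof (rule set_eqI)
    fix pq :: "nat \<times> nat"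
    obtain p q where pq: "pq = (p, q)" by fastforce
    show "pq \<in> inversions n (w \<circ> transpose i k) \<longleftrightarrow> pq \<in> inversions n w - {(i,k)}"
      unfolding pq inversions_def using key[of p] key[of q] adj ik
      by (cases "p = i"; cases "p = k"; cases "q = i"; cases "q = k"; auto)
  qed
qed

lemma region_mono:
  assumes "p \<le> q" shows "region n J p \<le> region n J q"
  unfolding region_def by (rule card_mono) (use assms in auto)

lemma key_lemma:
  assumes w: "w permutes {1..n}" and z: "z permutes {1..n}" and za: "avoids231 n J z"
    and zw: "inversions n z \<subseteq> inversions n w"
    and ijk: "1 \<le> i" "i < j" "j < k" "k \<le> n"
    and R: "region n J i \<noteq> region n J j" "region n J j \<noteq> region n J k"
    and wv: "w k < w i" "w i < w j" "w i = w k + 1"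
  shows "(i, k) \<notin> inversions n z"
proof
  assume ikz: "(i, k) \<in> inversions n z"
  have injz: "inj z" using permutes_inj[OF z] .
  have injw: "inj w" using permutes_inj[OF w] .
  have zki: "z k < z i" using ikz by (simp add: inversions_def)
  have "(i, j) \<notin> inversions n z" using zw wv ijk by (auto simp: inversions_def)
  moreover have "z i \<noteq> z j" using injz ijk by (auto dest: injD)
  ultimately have zij: "z i < z j" using ijk by (auto simp: inversions_def)
  have C: "p < i \<or> k < p" if p: "p \<in> {1..n}" "z k < z p" "z p < z i" for p
  proof (rule ccontr)
    assume "\<not> (p < i \<or> k < p)"
    moreover have "p \<noteq> i" "p \<noteq> k" using p(2,3) by auto
    ultimately have pik: "i < p" "p < k" by auto
    have "w p \<noteq> w i" "w p \<noteq> w k" using pik injw by (auto dest: injD)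
    then consider "w p < w k" | "w i < w p" using wv by linarith
    then show False
    proof cases
      case 1
      then have "(p, k) \<notin> inversions n z" using zw by (auto simp: inversions_def)
      then show False using pik p ijk by (auto simp: inversions_def)
    next
      case 2
      then have "(i, p) \<notin> inversions n z" using zw by (auto simp: inversions_def)
      then show False using pik p ijk by (auto simp: inversions_def)
    qed
  qed
  define S where "S = {p \<in> {1..n}. k \<le> p \<and> z k \<le> z p \<and> z p < z i}"
  have kS: "k \<in> S" using ijk zki by (auto simp: S_def)
  have finS: "finite S" by (simp add: S_def)
  define M where "M = Max (z ` S)"
  have "M \<in> z ` S" unfolding M_def using kS finS by (intro Max_in) auto
  then obtain c where cS: "c \<in> S" and zc: "z c = M" by auto
  have cmax: "z p \<le> z c" if "p \<in> S" for p using that finS zc unfolding M_def by auto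
  have zin: "z i \<in> {1..n}" using permutes_in_image[OF z] ijk by simp
  have "Suc (z c) \<in> {1..n}" using cS zin by (auto simp: S_def)
  then have "Suc (z c) \<in> z ` {1..n}" using permutes_image[OF z] by simp
  then obtain a where a: "a \<in> {1..n}" "z a = Suc (z c)" by auto
  have ai: "a \<le> i"
  proof (cases "Suc (z c) = z i")
    case True
    then have "a = i" using a injz by (auto dest: injD)
    then show ?thesis by simp
  next
    case False
    then have "z k < z a" "z a < z i" using a cS by (auto simp: S_def)
    then have "a < i \<or> k < a" using C[OF a(1)] by blast
    moreover have "\<not> k < a"
    proof
      assume "k < a"
      then have "a \<in> S" using a \<open>z k < z a\<close> \<open>z a < z i\<close> by (auto simp: S_def)
      then show False using cmax[of a] a(2) by simp
    qed
    ultimately show ?thesis by simp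
  qed
  have ck: "k \<le> c" "c \<le> n" using cS by (auto simp: S_def)
  have r1: "region n J a \<le> region n J i" using region_mono[OF ai] .
  have r2: "region n J i < region n J j" using R(1) region_mono[of i j n J] ijk by simp
  have r3: "region n J j < region n J k" using R(2) region_mono[of j k n J] ijk by simp
  have r4: "region n J k \<le> region n J c" using region_mono[OF ck(1)] .
  have "1 \<le> a \<and> a < j \<and> j < c \<and> c \<le> n \<and>
      region n J a \<noteq> region n J j \<and> region n J j \<noteq> region n J c \<and> region n J a \<noteq> region n J c \<and>
      z c < z a \<and> z a < z j \<and> z a = z c + 1"
    using a ai ijk ck r1 r2 r3 r4 zij cS by (auto simp: S_def)
  then show False using za unfolding avoids231_def by blast
qed

lemma swap_parabolic:
  assumes J: "J \<subseteq> {1..<n}" and w: "w \<in> parabolic n J"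
    and ik: "1 \<le> i" "i < k" "k \<le> n" and adj: "w i = w k + 1"
  shows "w \<circ> transpose i k \<in> parabolic n J"
proof -
  have wp: "w permutes {1..n}" using w by (simp add: parabolic_def perms_def)
  have wp': "w \<circ> transpose i k permutes {1..n}"
    by (rule permutes_compose[OF permutes_swap_id wp]) (use ik in auto)
  have inj': "inj (w \<circ> transpose i k)" using permutes_inj[OF wp'] .
  have I: "inversions n (w \<circ> transpose i k) = inversions n w - {(i,k)}"
    using swap_inv[OF wp ik adj] .
  have "(w \<circ> transpose i k) l < (w \<circ> transpose i k) (Suc l)" if l: "l \<in> J" for l
  proof -
    have "w l < w (Suc l)" using w l by (simp add: parabolic_def)
    then have "(l, Suc l) \<notin> inversions n w" by (simp add: inversions_def)
    then have "(l, Suc l) \<notin> inversions n (w \<circ> transpose i k)" using I by blast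
    moreover have "1 \<le> l" "Suc l \<le> n" using J l by auto
    moreover have "(w \<circ> transpose i k) l \<noteq> (w \<circ> transpose i k) (Suc l)"
      using inj' by (metis injD n_not_Suc_n)
    ultimately show ?thesis by (auto simp: inversions_def)
  qed
  then show ?thesis using wp' by (simp add: parabolic_def perms_def)
qed

lemma exists_greatest:
  assumes J: "J \<subseteq> {1..<n}"
  shows "w \<in> parabolic n J \<Longrightarrow> \<exists>y. greatest n J w y"
proof (induction "card (inversions n w)" arbitrary: w rule: less_induct)
  case less
  show ?case
  proof (cases "avoids231 n J w")
    case True
    then have "greatest n J w w" using less.prems
      by (auto simp: greatest_def parabolic231_def weak_le_def)
    then show ?thesis by blast
  next
    case False
    then obtain i j k where H: "1 \<le> i \<and> i < j \<and> j < k \<and> k \<le> n \<and>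
      region n J i \<noteq> region n J j \<and> region n J j \<noteq> region n J k \<and> region n J i \<noteq> region n J k \<and>
      w k < w i \<and> w i < w j \<and> w i = w k + 1"
      using False unfolding avoids231_def by blast
    have ijk: "1 \<le> i" "i < j" "j < k" "k \<le> n" using H by simp_all
    have R: "region n J i \<noteq> region n J j" "region n J j \<noteq> region n J k" using H by simp_all
    have wv: "w k < w i" "w i < w j" "w i = w k + 1" using H by simp_all
    define w' where "w' = w \<circ> transpose i k"
    have wp: "w permutes {1..n}" using less.prems by (simp add: parabolic_def perms_def)
    have w'p: "w' \<in> parabolic n J" unfolding w'_def
      using swap_parabolic[OF J less.prems _ _ _ wv(3)] ijk by simp
    have I: "inversions n w' = inversions n w - {(i,k)}" unfolding w'_def
      using swap_inv[OF wp _ _ _ wv(3)] ijk by simp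
    have ikw: "(i,k) \<in> inversions n w" using ijk wv by (simp add: inversions_def)
    have fin: "finite (inversions n w)"
      by (rule finite_subset[of _ "{1..n} \<times> {1..n}"]) (auto simp: inversions_def)
    have "card (inversions n w') < card (inversions n w)"
      unfolding I using card_Diff1_less[OF fin ikw] .
    then obtain y where y: "greatest n J w' y" using less.hyps[OF _ w'p] by blast
    have "greatest n J w y"
      unfolding greatest_def
    proof (intro conjI ballI impI)
      show "y \<in> parabolic231 n J" using y by (simp add: greatest_def)
      show "weak_le n y w" using y I by (auto simp: greatest_def weak_le_def)
      fix z assume z: "z \<in> parabolic231 n J" and zw: "weak_le n z w"
      have zp: "z permutes {1..n}" using z by (simp add: parabolic231_def parabolic_def perms_def)
      have za: "avoids231 n J z" using z by (simp add: parabolic231_def)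
      have "(i,k) \<notin> inversions n z"
        using key_lemma[OF wp zp za _ ijk R wv] zw by (simp add: weak_le_def)
      then have "weak_le n z w'" using zw I by (auto simp: weak_le_def)
      then show "weak_le n z y" using y z by (simp add: greatest_def)
    qed
    then show ?thesis by blast
  qed
qed

lemma greatest_unique:
  assumes g1: "greatest n J w y1" and g2: "greatest n J w y2"
  shows "y1 = y2"
proof -
  have m1: "y1 \<in> parabolic231 n J" "weak_le n y1 w"
    and a1: "\<forall>z \<in> parabolic231 n J. weak_le n z w \<longrightarrow> weak_le n z y1"
    using g1 unfolding greatest_def by simp_all
  have m2: "y2 \<in> parabolic231 n J" "weak_le n y2 w"
    and a2: "\<forall>z \<in> parabolic231 n J. weak_le n z w \<longrightarrow> weak_le n z y2"
    using g2 unfolding greatest_def by simp_all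
  have p: "y1 permutes {1..n}" "y2 permutes {1..n}"
    using m1(1) m2(1) by (simp_all add: parabolic231_def parabolic_def perms_def)
  have "weak_le n y1 y2" using a2 m1 by blast
  moreover have "weak_le n y2 y1" using a1 m2 by blast
  ultimately have "inversions n y1 = inversions n y2" unfolding weak_le_def by (rule subset_antisym)
  then show ?thesis by (rule inv_determines[OF p])
qed

lemma pi_down_eq:
  assumes J: "J \<subseteq> {1..<n}" and w: "w \<in> parabolic n J"
  shows "greatest n J w (pi_down n J w)"
proof -
  obtain y where y: "greatest n J w y" using exists_greatest[OF J w] by blast
  have "pi_down n J w = (THE y. greatest n J w y)"
    unfolding pi_down_def greatest_def by simp
  also have "\<dots> = y" by (rule the_equality[where P="greatest n J w", OF y], erule greatest_unique[OF _ y])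
  finally show ?thesis using y by simp
qed

theorem lemma3p13:
  fixes n :: nat and J :: "nat set" and u x v :: "nat \<Rightarrow> nat"
  assumes "J \<subseteq> {1..<n}"
    and "u \<in> parabolic n J" and "x \<in> parabolic n J" and "v \<in> parabolic n J"
    and "weak_le n u x" and "weak_le n x v"
    and "pi_down n J u = pi_down n J v"
  shows "pi_down n J u = pi_down n J x"
proof -
  let ?p = "pi_down n J u"
  have gu: "greatest n J u ?p" using pi_down_eq[OF assms(1,2)] .
  have gv: "greatest n J v ?p" using pi_down_eq[OF assms(1,4)] assms(7) by simp
  have "greatest n J x ?p"
    unfolding greatest_def
  proof (intro conjI ballI impI)
    show "?p \<in> parabolic231 n J" using gu by (simp add: greatest_def)
    show "weak_le n ?p x" using gu assms(5) by (auto simp: greatest_def weak_le_def)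
    fix z assume "z \<in> parabolic231 n J" "weak_le n z x"
    then show "weak_le n z ?p" using gv assms(6) by (auto simp: greatest_def weak_le_def)
  qed
  then show ?thesis by (rule greatest_unique[OF _ pi_down_eq[OF assms(1,3)]])
qed

end
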